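(* Let $(\mathbf x,\mathbf p,\mu)$ be a deterministic TFM satisfying weak UIC and $2$-weak-SCP. Then for every bid vector $\mathbf b$ and users $i,j$ with $x_i(\mathbf b)=1$ and $x_j(\mathbf b)=0$, we have $b_i\ge b_j$. In other words, the confirmed bids are the $k$ highest bids for some $k$ that may depend on $\mathbf b$.
   Context: Setting (TFM). Each user $i$ has a true value $v_i\ge0$ and submits a single bid $b_i\ge0$; $\mathbf b=(b_1,\dots,b_m)$, $\mathbf b_{-i}$ the other bids. A TFM has an inclusion rule (run by the miner, choosing at most $B$ bids) and confirmation, payment, miner-revenue rules (run by the blockchain on included bids); the mechanism treats users symmetrically (swapping two users' positions and bids swaps their outcomes). Composing the honest inclusion rule with the others gives deterministic $(\mathbf x,\mathbf p,\mu)$: $x_i(\mathbf b)\in\{0,1\}$ indicates confirmation, $p_i(\mathbf b)\le b_i$ the payment ($0$ if unconfirmed), $\mu(\mathbf b)$ the miner revenue. Strategic players (a user, the miner, or the miner with some users) may bid untruthfully after seeing all bids, inject fake bids (true value $0$), and (if the miner is involved) include any at most $B$ available bids in any positions. Weak ($1$-strict) utility: miner revenue (if the miner is in the player) plus $v-p$ for each confirmed transaction of the player (true value $v$, payment $p$), minus $(b-v)$ for each unconfirmed transaction of the player with bid $b>v$. Weak UIC: with an honest miner, each user's weak utility is maximized by truthful bidding without fake bids, whatever the other bids. $c$-weak-SCP: for every coalition of the miner with between $1$ and $c$ users, joint weak utility is maximized by truthful bidding and honest miner behavior, whatever the other bids. *)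

theory Defs
  imports Main "HOL.Real"
begin

text \<open>A bid vector is a list of reals; user i (i < length b) has bid b ! i.
  incl: the honest inclusion rule, returning the (ordered) list of indices of included
        bids; the block is the list of included bids in that order.
  conf, pay, rev: confirmation, payment and miner-revenue rules run by the blockchain on a
        block (list of bids); conf blk k / pay blk k refer to position k of the block.\<close>

record tfm =
  incl :: "real list \<Rightarrow> nat list"
  conf :: "real list \<Rightarrow> nat \<Rightarrow> bool"
  pay  :: "real list \<Rightarrow> nat \<Rightarrow> real"
  rev  :: "real list \<Rightarrow> real"

definition nonneg :: "real list \<Rightarrow> bool" where
  "nonneg b \<longleftrightarrow> (\<forall>x\<in>set b. 0 \<le> x)"

definition block_of :: "real list \<Rightarrow> nat list \<Rightarrow> real list" where
  "block_of a idx = map (\<lambda>k. a ! k) idx"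

definition conf_in :: "tfm \<Rightarrow> real list \<Rightarrow> nat list \<Rightarrow> nat \<Rightarrow> bool" where
  "conf_in M a idx i \<longleftrightarrow>
     (\<exists>k < length idx. idx ! k = i \<and> conf M (block_of a idx) k)"

definition pay_in :: "tfm \<Rightarrow> real list \<Rightarrow> nat list \<Rightarrow> nat \<Rightarrow> real" where
  "pay_in M a idx i =
     (if conf_in M a idx i
      then pay M (block_of a idx) (LEAST k. k < length idx \<and> idx ! k = i)
      else 0)"

definition xx :: "tfm \<Rightarrow> real list \<Rightarrow> nat \<Rightarrow> bool" where
  "xx M b i = conf_in M b (incl M b) i"

definition pp :: "tfm \<Rightarrow> real list \<Rightarrow> nat \<Rightarrow> real" where
  "pp M b i = pay_in M b (incl M b) i"

definition mu :: "tfm \<Rightarrow> real list \<Rightarrow> real" where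
  "mu M b = rev M (block_of b (incl M b))"

definition swap_idx :: "nat \<Rightarrow> nat \<Rightarrow> nat \<Rightarrow> nat" where
  "swap_idx i j k = (if k = i then j else if k = j then i else k)"

definition well_formed :: "tfm \<Rightarrow> nat \<Rightarrow> bool" where
  "well_formed M B \<longleftrightarrow>
     (\<forall>b. distinct (incl M b) \<and> set (incl M b) \<subseteq> {..<length b} \<and> length (incl M b) \<le> B)
   \<and> (\<forall>b. nonneg b \<longrightarrow> (\<forall>i < length b. pp M b i \<le> b ! i))
   \<and> (\<forall>b i j. nonneg b \<longrightarrow> i < length b \<longrightarrow> j < length b \<longrightarrow>
        (let b' = b[i := b ! j, j := b ! i] in
           (\<forall>k. xx M b' k = xx M b (swap_idx i j k))
         \<and> (\<forall>k. pp M b' k = pp M b (swap_idx i j k))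
         \<and> mu M b' = mu M b))"

definition weak_util :: "tfm \<Rightarrow> real list \<Rightarrow> nat list \<Rightarrow> nat set \<Rightarrow> (nat \<Rightarrow> real) \<Rightarrow> real" where
  "weak_util M a idx own v =
     (\<Sum>i\<in>own. if conf_in M a idx i then v i - pay_in M a idx i
               else if a ! i > v i then - (a ! i - v i) else 0)"

text \<open>True values: original users bid truthfully in b; injected fake bids (indices
  length b, length b + 1, ...) have true value 0.\<close>
definition true_val :: "real list \<Rightarrow> nat \<Rightarrow> real" where
  "true_val b k = (if k < length b then b ! k else 0)"

text \<open>Weak UIC: with an honest miner, a user i whose true value is b ! i cannot gain by
  changing its bid and/or injecting fake bids (appended after the original bids).\<close>
definition weak_UIC :: "tfm \<Rightarrow> bool" where
  "weak_UIC M \<longleftrightarrow>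
     (\<forall>b i a. nonneg b \<longrightarrow> i < length b \<longrightarrow> nonneg a \<longrightarrow> length b \<le> length a \<longrightarrow>
        (\<forall>j < length b. j \<noteq> i \<longrightarrow> a ! j = b ! j) \<longrightarrow>
        weak_util M a (incl M a) ({i} \<union> {length b..<length a}) (true_val b)
          \<le> weak_util M b (incl M b) {i} (true_val b))"

definition weak_SCP :: "tfm \<Rightarrow> nat \<Rightarrow> nat \<Rightarrow> bool" where
  "weak_SCP M B c \<longleftrightarrow>
     (\<forall>b C a idx. nonneg b \<longrightarrow> C \<subseteq> {..<length b} \<longrightarrow> 1 \<le> card C \<longrightarrow> card C \<le> c \<longrightarrow>
        nonneg a \<longrightarrow> length b \<le> length a \<longrightarrow>
        (\<forall>j < length b. j \<notin> C \<longrightarrow> a ! j = b ! j) \<longrightarrow>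
        distinct idx \<longrightarrow> set idx \<subseteq> {..<length a} \<longrightarrow> length idx \<le> B \<longrightarrow>
        rev M (block_of a idx) + weak_util M a idx (C \<union> {length b..<length a}) (true_val b)
          \<le> mu M b + weak_util M b (incl M b) C (true_val b))"

end

theory Submission
  imports Defs
begin

lemma wu_single:
  "weak_util M a idx {i} v =
     (if conf_in M a idx i then v i - pay_in M a idx i
      else if a ! i > v i then - (a ! i - v i) else 0)"
  by (simp add: weak_util_def)

lemma wu_pair:
  "i \<noteq> j \<Longrightarrow> weak_util M a idx {i, j} v = weak_util M a idx {i} v + weak_util M a idx {j} v"
  by (simp add: weak_util_def)

theorem mainTheorem15:
  fixes M :: tfm and B :: nat
  assumes "well_formed M B"
    and "weak_UIC M"
    and "weak_SCP M B 2"
  shows "\<forall>b i j. nonneg b \<longrightarrow> i < length b \<longrightarrow> j < length b \<longrightarrow>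
           xx M b i \<longrightarrow> \<not> xx M b j \<longrightarrow> b ! j \<le> b ! i"
proof (intro allI impI)
  fix b i j
  assume nb: "nonneg b" and il: "i < length b" and jl: "j < length b"
    and xi: "xx M b i" and xj: "\<not> xx M b j"
  show "b ! j \<le> b ! i"
  proof (rule ccontr)
    assume "\<not> b ! j \<le> b ! i"
    hence lt: "b ! i < b ! j" by simp
    have ij: "i \<noteq> j" using xi xj by auto
    define v where "v = b[i := b ! j]"
    have lv: "length v = length b" by (simp add: v_def)
    have vi: "v ! i = b ! j" using il by (simp add: v_def)
    have vj: "v ! j = b ! j" using ij by (simp add: v_def)
    have vk: "\<And>k. k \<noteq> i \<Longrightarrow> v ! k = b ! k" by (simp add: v_def)
    have nv: "nonneg v"
    proof -
      have "set v \<subseteq> insert (b ! j) (set b)" unfolding v_def by (rule set_update_subset_insert)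
      moreover have "b ! j \<in> set b" using jl by simp
      ultimately show ?thesis using nb unfolding nonneg_def by blast
    qed
    have wf1: "\<And>b i. nonneg b \<Longrightarrow> i < length b \<Longrightarrow> pp M b i \<le> b ! i"
      using assms(1) unfolding well_formed_def by blast
    have sw: "v[i := v ! j, j := v ! i] = v" using vi vj by (metis list_update_id)
    have sym: "(\<forall>k. xx M v k = xx M v (swap_idx i j k)) \<and> (\<forall>k. pp M v k = pp M v (swap_idx i j k))"
    proof -
      have "\<forall>b i j. nonneg b \<longrightarrow> i < length b \<longrightarrow> j < length b \<longrightarrow>
        (let b' = b[i := b ! j, j := b ! i] in
           (\<forall>k. xx M b' k = xx M b (swap_idx i j k))
         \<and> (\<forall>k. pp M b' k = pp M b (swap_idx i j k))
         \<and> mu M b' = mu M b)" using assms(1) unfolding well_formed_def by blast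
      hence "let b' = v[i := v ! j, j := v ! i] in
           (\<forall>k. xx M b' k = xx M v (swap_idx i j k))
         \<and> (\<forall>k. pp M b' k = pp M v (swap_idx i j k))
         \<and> mu M b' = mu M v" using nv il jl lv by simp
      thus ?thesis unfolding Let_def sw by blast
    qed
    have xeq: "xx M v j = xx M v i" using conjunct1[OF sym, rule_format, of j] ij
      by (simp add: swap_idx_def)
    have peq: "pp M v j = pp M v i" using conjunct2[OF sym, rule_format, of j] ij
      by (simp add: swap_idx_def)
    have ppb: "pp M b i \<le> b ! i" using wf1 nb il .
    have tvv: "\<And>k. k < length b \<Longrightarrow> true_val v k = v ! k" by (simp add: true_val_def lv)
    have tvb: "\<And>k. k < length b \<Longrightarrow> true_val b k = b ! k" by (simp add: true_val_def)
    (* Step 1: UIC in world v, user i deviates to b *)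
    have U: "weak_util M b (incl M b) ({i} \<union> {length v..<length b}) (true_val v)
          \<le> weak_util M v (incl M v) {i} (true_val v)"
    proof -
      have "\<forall>k<length v. k \<noteq> i \<longrightarrow> b ! k = v ! k" using vk by (simp add: lv)
      thus ?thesis using assms(2)[unfolded weak_UIC_def, rule_format, of v i b] nv il lv nb
        by simp
    qed
    have L1: "weak_util M b (incl M b) ({i} \<union> {length v..<length b}) (true_val v) = b ! j - pp M b i"
      using xi lv il vi tvv by (simp add: wu_single xx_def pp_def)
    have R1: "weak_util M v (incl M v) {i} (true_val v) =
       (if xx M v i then b ! j - pp M v i else 0)"
      using lv il vi tvv by (simp add: wu_single xx_def pp_def)
    have X: "xx M v i" and P: "pp M v i \<le> pp M b i"
      using U L1 R1 ppb lt by (auto split: if_splits)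
    (* Step 2: SCP in world v, coalition {i}, deviate to b *)
    have S2: "rev M (block_of b (incl M b)) + weak_util M b (incl M b) ({i} \<union> {length v..<length b}) (true_val v)
          \<le> mu M v + weak_util M v (incl M v) {i} (true_val v)"
    proof -
      have wfi: "distinct (incl M b) \<and> set (incl M b) \<subseteq> {..<length b} \<and> length (incl M b) \<le> B"
        using assms(1) unfolding well_formed_def by blast
      show ?thesis
      proof -
        have "\<forall>k<length v. k \<notin> {i} \<longrightarrow> b ! k = v ! k" using vk by (simp add: lv)
        thus ?thesis using assms(3)[unfolded weak_SCP_def, rule_format, of v "{i}" b "incl M b"] nv il lv nb wfi
          by simp
      qed
    qed
    have S2': "mu M b + (b ! j - pp M b i) \<le> mu M v + (b ! j - pp M v i)"
      using S2 L1 R1 X by (simp add: mu_def)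
    (* Step 3: SCP in world b, coalition {i,j}, deviate to v *)
    have S3: "rev M (block_of v (incl M v)) + weak_util M v (incl M v) ({i, j} \<union> {length b..<length v}) (true_val b)
          \<le> mu M b + weak_util M b (incl M b) {i, j} (true_val b)"
    proof -
      have wfi: "distinct (incl M v) \<and> set (incl M v) \<subseteq> {..<length v} \<and> length (incl M v) \<le> B"
        using assms(1) unfolding well_formed_def by blast
      have C: "{i, j} \<subseteq> {..<length b}" "1 \<le> card {i, j}" "card {i, j} \<le> 2"
        using il jl ij by auto
      have ag: "\<forall>k<length b. k \<notin> {i, j} \<longrightarrow> v ! k = b ! k" using vk by auto
      show ?thesis
        using assms(3)[unfolded weak_SCP_def, rule_format, of b "{i,j}" v "incl M v"] nb nv C lv ag wfi
        by simp
    qed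
    have L3: "weak_util M v (incl M v) ({i, j} \<union> {length b..<length v}) (true_val b)
       = (b ! i - pp M v i) + (b ! j - pp M v i)"
      using X xeq peq ij lv il jl tvb by (simp add: wu_pair wu_single xx_def pp_def)
    have R3: "weak_util M b (incl M b) {i, j} (true_val b) = b ! i - pp M b i"
      using xi xj ij il jl tvb by (simp add: wu_pair wu_single xx_def pp_def)
    have "mu M v + (b ! i - pp M v i) + (b ! j - pp M v i) \<le> mu M b + (b ! i - pp M b i)"
      using S3 L3 R3 by (simp add: mu_def)
    with S2' P ppb lt show False by linarith
  qed
qed

end
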